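(* Let $d \geq 2$ and let $\varGamma$ be a lattice in $\mathbb{R}^d$. Let $R \in \operatorname{SOS}(\varGamma)$. Then: (1) $b\cdot \operatorname{scal}_\varGamma(R) \subset \operatorname{scal}_\varGamma(R)$ for all $b \in \mathbb{Q}\setminus\{0\}$; (2) if $r \in \mathbb{R}$ satisfies $r\varGamma \sim \varGamma$, then $r \in \mathbb{Q}$; (3) $\alpha\beta^{-1} \in \mathbb{Q}$ for all $\alpha, \beta \in \operatorname{scal}_\varGamma(R)$.
   Context: A lattice in $\mathbb{R}^d$ is a subgroup of the form $\mathbb{Z}b_1\oplus\cdots\oplus\mathbb{Z}b_d$ where $\{b_1,\dots,b_d\}$ is a basis of $\mathbb{R}^d$. Two lattices (more generally, subgroups) $\varGamma,\varGamma'$ of $\mathbb{R}^d$ are commensurate, written $\varGamma\sim\varGamma'$, if $\varGamma\cap\varGamma'$ has finite index both in $\varGamma$ and in $\varGamma'$. For $R\in\operatorname{SO}(d)$, $\operatorname{scal}_\varGamma(R)=\{\alpha\in\mathbb{R} : \varGamma\sim\alpha R\varGamma\}$. The group of similarity rotations is $\operatorname{SOS}(\varGamma)=\{R\in\operatorname{SO}(d) : \varGamma\sim\alpha R\varGamma \text{ for some } \alpha>0\}$, equivalently the set of $R\in\operatorname{SO}(d)$ with $\operatorname{scal}_\varGamma(R)\neq\varnothing$. *)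

theory Defs
  imports "HOL-Analysis.Analysis"
begin

text \<open>A lattice in R^d: the integer span of a basis b_1,...,b_d of R^d
  (basis indexed by the finite index type 'n, d = CARD('n)).\<close>
definition is_lattice :: "(real^'n) set \<Rightarrow> bool" where
  "is_lattice \<Gamma> \<longleftrightarrow> (\<exists>b :: 'n \<Rightarrow> real^'n.
      inj b \<and> independent (range b) \<and> span (range b) = UNIV \<and>
      \<Gamma> = {(\<Sum>i\<in>UNIV. of_int (k i) *\<^sub>R b i) | k :: 'n \<Rightarrow> int. True})"

definition cosets_in :: "('a::ab_group_add) set \<Rightarrow> 'a set \<Rightarrow> 'a set set" where
  "cosets_in H G = {(\<lambda>x. g + x) ` H | g. g \<in> G}"

definition commensurate :: "('a::ab_group_add) set \<Rightarrow> 'a set \<Rightarrow> bool" where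
  "commensurate G G' \<longleftrightarrow>
     finite (cosets_in (G \<inter> G') G) \<and> finite (cosets_in (G \<inter> G') G')"

definition SO :: "(real^'n^'n) set" where
  "SO = {R. orthogonal_matrix R \<and> det R = 1}"

definition scal :: "(real^'n) set \<Rightarrow> real^'n^'n \<Rightarrow> real set" where
  "scal \<Gamma> R = {\<alpha>. commensurate \<Gamma> ((\<lambda>x. \<alpha> *\<^sub>R (R *v x)) ` \<Gamma>)}"

definition SOS :: "(real^'n) set \<Rightarrow> (real^'n^'n) set" where
  "SOS \<Gamma> = {R \<in> SO. \<exists>\<alpha>>0. commensurate \<Gamma> ((\<lambda>x. \<alpha> *\<^sub>R (R *v x)) ` \<Gamma>)}"

end

theory Submission imports Defs begin
definition addgrp :: "'a::real_vector set \<Rightarrow> bool" where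
  "addgrp X \<longleftrightarrow> 0 \<in> X \<and> (\<forall>x\<in>X. \<forall>y\<in>X. x + y \<in> X) \<and> (\<forall>x\<in>X. - x \<in> X)"

definition L :: "('i::finite \<Rightarrow> 'a::real_vector) \<Rightarrow> 'a set" where
  "L v = {(\<Sum>i\<in>UNIV. of_int (k i) *\<^sub>R v i) | k :: 'i \<Rightarrow> int. True}"

lemma addgrp_nat: "addgrp X \<Longrightarrow> x \<in> X \<Longrightarrow> of_nat n *\<^sub>R x \<in> X"
  by (induction n) (auto simp: addgrp_def algebra_simps)

lemma addgrp_int: "addgrp X \<Longrightarrow> x \<in> X \<Longrightarrow> of_int k *\<^sub>R x \<in> X"
proof (cases "k \<ge> 0")
  case True
  assume a: "addgrp X" "x \<in> X"
  then have "of_nat (nat k) *\<^sub>R x \<in> X" by (rule addgrp_nat)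
  then show ?thesis using True by simp
next
  case False
  assume a: "addgrp X" "x \<in> X"
  then have "of_nat (nat (-k)) *\<^sub>R x \<in> X" by (rule addgrp_nat)
  then have "- (of_nat (nat (-k)) *\<^sub>R x) \<in> X" using a by (auto simp: addgrp_def)
  then show ?thesis using False by simp
qed

lemma addgrp_sum: "addgrp X \<Longrightarrow> (\<And>i. i \<in> I \<Longrightarrow> f i \<in> X) \<Longrightarrow> sum f I \<in> X"
  by (induction I rule: infinite_finite_induct) (auto simp: addgrp_def)

lemma addgrp_Int: "addgrp X \<Longrightarrow> addgrp Y \<Longrightarrow> addgrp (X \<inter> Y)"
  by (auto simp: addgrp_def)

lemma addgrp_image: "linear f \<Longrightarrow> addgrp X \<Longrightarrow> addgrp (f ` X)"
  unfolding addgrp_def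
  by (auto simp: linear_add[symmetric] linear_neg[symmetric] linear_0[symmetric] intro!: image_eqI)

lemma addgrp_L: "addgrp (L v)"
  unfolding addgrp_def L_def
proof (intro conjI ballI)
  show "0 \<in> {\<Sum>i\<in>UNIV. of_int (k i) *\<^sub>R v i |k. True}"
    by (rule CollectI, rule exI[of _ "\<lambda>i. 0"]) simp
next
  fix x y assume "x \<in> {\<Sum>i\<in>UNIV. of_int (k i) *\<^sub>R v i |k. True}" "y \<in> {\<Sum>i\<in>UNIV. of_int (k i) *\<^sub>R v i |k. True}"
  then obtain k k' where "x = (\<Sum>i\<in>UNIV. of_int (k i) *\<^sub>R v i)" "y = (\<Sum>i\<in>UNIV. of_int (k' i) *\<^sub>R v i)" by auto
  then show "x + y \<in> {\<Sum>i\<in>UNIV. of_int (k i) *\<^sub>R v i |k. True}"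
    by (intro CollectI exI[of _ "\<lambda>i. k i + k' i"]) (simp add: sum.distrib scaleR_add_left)
next
  fix x assume "x \<in> {\<Sum>i\<in>UNIV. of_int (k i) *\<^sub>R v i |k. True}"
  then obtain k where "x = (\<Sum>i\<in>UNIV. of_int (k i) *\<^sub>R v i)" by auto
  then show "- x \<in> {\<Sum>i\<in>UNIV. of_int (k i) *\<^sub>R v i |k. True}"
    by (intro CollectI exI[of _ "\<lambda>i. - k i"]) (simp add: sum_negf)
qed

lemma sum_delta_scale:
  fixes b :: "'i::finite \<Rightarrow> 'a::real_vector" and x :: real
  shows "(\<Sum>i\<in>(UNIV::'i::finite set). (if i = j then x else 0) *\<^sub>R b i) = x *\<^sub>R b j"
proof -
  have "(\<Sum>i\<in>(UNIV::'i set). (if i = j then x else 0) *\<^sub>R b i) = (\<Sum>i\<in>(UNIV::'i set). if i = j then x *\<^sub>R b i else 0)"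
    by (rule sum.cong) auto
  then show ?thesis by (simp add: sum.delta)
qed

lemma L_mem: "v j \<in> L v"
proof -
  have "v j = (\<Sum>i\<in>UNIV. of_int (if i = j then 1 else 0) *\<^sub>R v i)"
    using sum_delta_scale[of j 1 v] by (simp add: if_distrib[of real_of_int] cong: if_cong)
  then show ?thesis unfolding L_def by (intro CollectI exI[of _ "\<lambda>i. if i = j then 1 else 0"]) simp
qed

lemma L_image: "linear f \<Longrightarrow> f ` L v = L (\<lambda>i. f (v i))"
proof -
  assume f: "linear f"
  have e: "f (\<Sum>i\<in>UNIV. real_of_int (k i) *\<^sub>R v i) = (\<Sum>i\<in>UNIV. real_of_int (k i) *\<^sub>R f (v i))" for k
    using f by (simp add: linear_sum linear_scale)
  show ?thesis unfolding L_def
  proof (rule set_eqI, rule iffI)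
    fix y assume "y \<in> f ` {\<Sum>i\<in>UNIV. real_of_int (k i) *\<^sub>R v i |k. True}"
    then obtain k where "y = f (\<Sum>i\<in>UNIV. real_of_int (k i) *\<^sub>R v i)" by auto
    then show "y \<in> {\<Sum>i\<in>UNIV. real_of_int (k i) *\<^sub>R f (v i) |k. True}" using e by auto
  next
    fix y assume "y \<in> {\<Sum>i\<in>UNIV. real_of_int (k i) *\<^sub>R f (v i) |k. True}"
    then obtain k where "y = (\<Sum>i\<in>UNIV. real_of_int (k i) *\<^sub>R f (v i))" by auto
    then have "y = f (\<Sum>i\<in>UNIV. real_of_int (k i) *\<^sub>R v i)" using e by auto
    then show "y \<in> f ` {\<Sum>i\<in>UNIV. real_of_int (k i) *\<^sub>R v i |k. True}" by auto
  qed
qed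

lemma coset_eq:
  assumes "addgrp H" "a - c \<in> H"
  shows "(\<lambda>x. a + x) ` H = (\<lambda>x. c + x) ` H"
proof
  show "(\<lambda>x. a + x) ` H \<subseteq> (\<lambda>x. c + x) ` H"
  proof
    fix y assume "y \<in> (\<lambda>x. a + x) ` H"
    then obtain x where x: "x \<in> H" "y = a + x" by auto
    have "(a - c) + x \<in> H" using assms x by (auto simp: addgrp_def)
    moreover have "y = c + ((a - c) + x)" using x by simp
    ultimately show "y \<in> (\<lambda>x. c + x) ` H" by blast
  qed
next
  show "(\<lambda>x. c + x) ` H \<subseteq> (\<lambda>x. a + x) ` H"
  proof
    fix y assume "y \<in> (\<lambda>x. c + x) ` H"
    then obtain x where x: "x \<in> H" "y = c + x" by auto
    have "- (a - c) \<in> H" using assms by (auto simp: addgrp_def)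
    then have "x + - (a - c) \<in> H" using assms x by (auto simp: addgrp_def)
    moreover have "y = a + (x + - (a - c))" using x by simp
    ultimately show "y \<in> (\<lambda>x. a + x) ` H" by blast
  qed
qed

lemma pigeon:
  fixes g :: "'a::real_vector"
  assumes fin: "finite (cosets_in H G)" and "0 \<in> H" and "g \<in> G"
    and mult: "\<And>n::nat. of_nat n *\<^sub>R g \<in> G"
  shows "\<exists>m::nat. m > 0 \<and> of_nat m *\<^sub>R g \<in> H"
proof -
  define f where "f n = (\<lambda>x. of_nat n *\<^sub>R g + x) ` H" for n :: nat
  have "range f \<subseteq> cosets_in H G" unfolding f_def cosets_in_def using mult by blast
  then have "finite (range f)" using fin finite_subset by blast
  then have "\<not> inj f" using finite_imageD infinite_UNIV_nat by blast
  then obtain i j where ij: "i \<noteq> j" "f i = f j" unfolding inj_def by blast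
  have key: "\<exists>m::nat. m > 0 \<and> of_nat m *\<^sub>R g \<in> H" if "i < j" "f i = f j" for i j
  proof -
    have "of_nat j *\<^sub>R g + 0 \<in> f j" unfolding f_def using assms by blast
    then have "of_nat j *\<^sub>R g \<in> f i" using that by simp
    then obtain h where h: "h \<in> H" "of_nat j *\<^sub>R g = of_nat i *\<^sub>R g + h" unfolding f_def by auto
    have "of_nat (j - i) *\<^sub>R g = h" using h(2) that(1)
      by (simp add: of_nat_diff scaleR_diff_left algebra_simps)
    then show ?thesis using h(1) that(1) by (intro exI[of _ "j - i"]) auto
  qed
  show ?thesis using ij key by (cases "i < j") (auto simp: linorder_neq_iff)
qed


lemma finite_cosets_L:
  fixes v :: "'i::finite \<Rightarrow> 'a::real_vector"
  assumes H: "addgrp H" and m: "\<And>i. \<exists>m::nat. m > 0 \<and> of_nat m *\<^sub>R v i \<in> H"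
  shows "finite (cosets_in H (L v))"
proof -
  obtain m :: "'i \<Rightarrow> nat" where m: "\<And>i. m i > 0 \<and> of_nat (m i) *\<^sub>R v i \<in> H"
    using m by metis
  define rep where "rep k = (\<Sum>i\<in>UNIV. of_int (k i mod int (m i)) *\<^sub>R v i)" for k :: "'i \<Rightarrow> int"
  define K where "K = Pi UNIV (\<lambda>i. {0..<int (m i)})"
  have finK: "finite K" unfolding K_def
    using finite_PiE[of UNIV "\<lambda>i. {0..<int (m i)}"] by (simp add: PiE_UNIV_domain)
  have "cosets_in H (L v) \<subseteq> (\<lambda>k. (\<lambda>x. rep k + x) ` H) ` K"
  proof
    fix C assume "C \<in> cosets_in H (L v)"
    then obtain k where C: "C = (\<lambda>x. (\<Sum>i\<in>UNIV. of_int (k i) *\<^sub>R v i) + x) ` H"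
      unfolding cosets_in_def L_def by auto
    have diff: "(\<Sum>i\<in>UNIV. of_int (k i) *\<^sub>R v i) - rep k
        = (\<Sum>i\<in>UNIV. of_int (k i div int (m i)) *\<^sub>R (of_nat (m i) *\<^sub>R v i))"
      unfolding rep_def sum_subtractf[symmetric]
    proof (rule sum.cong[OF refl])
      fix i
      have "real_of_int (k i) = real_of_int (k i div int (m i)) * real (m i) + real_of_int (k i mod int (m i))"
        by (metis of_int_add of_int_mult of_int_of_nat_eq div_mult_mod_eq)
      then show "of_int (k i) *\<^sub>R v i - of_int (k i mod int (m i)) *\<^sub>R v i =
          of_int (k i div int (m i)) *\<^sub>R (of_nat (m i) *\<^sub>R v i)"
        by (simp add: scaleR_diff_left[symmetric])
    qed
    have "(\<Sum>i\<in>UNIV. of_int (k i) *\<^sub>R v i) - rep k \<in> H"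
      unfolding diff using H m by (intro addgrp_sum addgrp_int) auto
    then have "C = (\<lambda>x. rep k + x) ` H" unfolding C by (rule coset_eq[OF H])
    moreover have "rep k = rep (\<lambda>i. k i mod int (m i))" unfolding rep_def by simp
    moreover have "(\<lambda>i. k i mod int (m i)) \<in> K" unfolding K_def using m by auto
    ultimately show "C \<in> (\<lambda>k. (\<lambda>x. rep k + x) ` H) ` K" by auto
  qed
  then show ?thesis using finK finite_subset by blast
qed

lemma coef_zero:
  fixes b :: "'i::finite \<Rightarrow> 'a::real_vector"
  assumes "inj b" "independent (range b)" "(\<Sum>i\<in>UNIV. c i *\<^sub>R b i) = 0"
  shows "c j = 0"
proof -
  have "(\<Sum>x\<in>range b. c (inv b x) *\<^sub>R x) = 0"
    using assms by (simp add: sum.reindex)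
  then have "c (inv b (b j)) = 0"
    using independentD[OF assms(2), of "range b" "\<lambda>x. c (inv b x)" "b j"] by simp
  then show ?thesis using assms(1) by simp
qed

lemma coef:
  fixes b :: "'i::finite \<Rightarrow> 'a::real_vector"
  assumes "inj b" "independent (range b)" "(\<Sum>i\<in>UNIV. of_int (k i) *\<^sub>R b i) = x *\<^sub>R b j"
  shows "of_int (k j) = x"
proof -
  let ?c = "\<lambda>i. of_int (k i) - (if i = j then x else 0)"
  have "(\<Sum>i\<in>UNIV. ?c i *\<^sub>R b i) = (\<Sum>i\<in>UNIV. of_int (k i) *\<^sub>R b i) - (\<Sum>i\<in>UNIV. (if i = j then x else 0) *\<^sub>R b i)"
    by (simp add: scaleR_diff_left sum_subtractf)
  also have "\<dots> = 0" using assms(3) by (simp add: sum_delta_scale)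
  finally have "?c j = 0" by (rule coef_zero[OF assms(1,2)])
  then show ?thesis by simp
qed

lemma linR: "linear (\<lambda>x. c *\<^sub>R ((R::real^'n^'n) *v x))"
  using linear_compose[OF matrix_vector_mul_linear[of R] linear_scale_self[of c]] by (simp add: o_def)

lemma linS: "linear (\<lambda>x::'a::real_vector. c *\<^sub>R x)"
  by (rule linear_scale_self)

lemma addgrp_nat': "addgrp X \<Longrightarrow> x \<in> X \<Longrightarrow> \<forall>n::nat. of_nat n *\<^sub>R x \<in> X"
  using addgrp_nat by blast

theorem mainTheorem1:
  fixes \<Gamma> :: "(real^'n) set" and R :: "real^'n^'n"
  assumes "CARD('n) \<ge> 2"
    and "is_lattice \<Gamma>"
    and "R \<in> SOS \<Gamma>"
  shows "(\<forall>b\<in>\<rat> - {0}. (\<lambda>a. b * a) ` scal \<Gamma> R \<subseteq> scal \<Gamma> R)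
    \<and> (\<forall>r::real. commensurate ((\<lambda>x. r *\<^sub>R x) ` \<Gamma>) \<Gamma> \<longrightarrow> r \<in> \<rat>)
    \<and> (\<forall>\<alpha>\<in>scal \<Gamma> R. \<forall>\<beta>\<in>scal \<Gamma> R. \<alpha> * inverse \<beta> \<in> \<rat>)"
proof -
  obtain bv :: "'n \<Rightarrow> real^'n" where bv: "inj bv" "independent (range bv)"
    and G: "\<Gamma> = L bv"
    using assms(2) unfolding is_lattice_def L_def by blast
  have gG: "addgrp \<Gamma>" unfolding G by (rule addgrp_L)
  have bnz: "bv j \<noteq> 0" for j
    using bv(2) dependent_zero by (metis rangeI)
  define T where "T c = (\<lambda>x. c *\<^sub>R (R *v x)) ` \<Gamma>" for c
  have gT: "addgrp (T c)" for c unfolding T_def by (rule addgrp_image[OF linR gG])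
  have scalT: "c \<in> scal \<Gamma> R \<longleftrightarrow> commensurate \<Gamma> (T c)" for c
    unfolding scal_def T_def by simp
  have inG: "(\<Sum>i\<in>UNIV. of_int (k i) *\<^sub>R bv i) \<in> \<Gamma>" for k unfolding G L_def by blast
  have memG: "x \<in> \<Gamma> \<Longrightarrow> \<exists>k. x = (\<Sum>i\<in>UNIV. of_int (k i) *\<^sub>R bv i)" for x
    unfolding G L_def by blast
  fix j0 :: 'n
  have P2: "r \<in> \<rat>" if c: "commensurate ((\<lambda>x. r *\<^sub>R x) ` \<Gamma>) \<Gamma>" for r :: real
  proof -
    let ?H = "(\<lambda>x. r *\<^sub>R x) ` \<Gamma> \<inter> \<Gamma>"
    have "finite (cosets_in ?H \<Gamma>)" using c unfolding commensurate_def by blast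
    moreover have "0 \<in> ?H" using gG unfolding addgrp_def by (auto intro: image_eqI[of 0 _ 0])
    ultimately obtain m :: nat where m: "m > 0" "of_nat m *\<^sub>R bv j0 \<in> ?H"
      using pigeon[of ?H \<Gamma> "bv j0"] addgrp_nat[OF gG] L_mem G by blast
    then obtain \<gamma> where ga: "\<gamma> \<in> \<Gamma>" "of_nat m *\<^sub>R bv j0 = r *\<^sub>R \<gamma>" by auto
    obtain k where k: "\<gamma> = (\<Sum>i\<in>UNIV. of_int (k i) *\<^sub>R bv i)" using memG[OF ga(1)] by blast
    have r0: "r \<noteq> 0" using ga(2) m(1) bnz by auto
    have "\<gamma> = (of_nat m / r) *\<^sub>R bv j0" using ga(2) r0
      by (metis (no_types, lifting) divide_inverse_commute mult.commute scaleR_scaleR right_inverse scaleR_one)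
    then have "of_int (k j0) = of_nat m / r" using coef[OF bv, of k "of_nat m / r" j0] k by simp
    then have "r = of_nat m / of_int (k j0)" using r0 m(1)
      by (metis divide_divide_eq_right divide_self_if mult.commute nonzero_mult_div_cancel_left of_nat_0_less_iff order_less_irrefl divide_eq_0_iff)
    then show ?thesis by simp
  qed
  have P3: "\<alpha> * inverse \<beta> \<in> \<rat>" if a: "\<alpha> \<in> scal \<Gamma> R" and b: "\<beta> \<in> scal \<Gamma> R" for \<alpha> \<beta>
  proof (cases "\<alpha> = 0 \<or> \<beta> = 0")
    case True then show ?thesis by auto
  next
    case False
    then have a0: "\<alpha> \<noteq> 0" and b0: "\<beta> \<noteq> 0" by auto
    let ?H = "\<Gamma> \<inter> T \<alpha>"
    have "finite (cosets_in ?H \<Gamma>)" using a scalT unfolding commensurate_def by blast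
    moreover have "0 \<in> ?H" using gG gT unfolding addgrp_def by blast
    ultimately obtain m :: nat where m: "m > 0" "of_nat m *\<^sub>R bv j0 \<in> ?H"
      using pigeon[of ?H \<Gamma> "bv j0"] addgrp_nat[OF gG] L_mem G by blast
    then obtain \<gamma> where ga: "\<gamma> \<in> \<Gamma>" "of_nat m *\<^sub>R bv j0 = \<alpha> *\<^sub>R (R *v \<gamma>)"
      unfolding T_def by auto
    let ?H2 = "\<Gamma> \<inter> T \<beta>"
    have "finite (cosets_in ?H2 (T \<beta>))" using b scalT unfolding commensurate_def by blast
    moreover have "0 \<in> ?H2" using gG gT unfolding addgrp_def by blast
    moreover have "\<beta> *\<^sub>R (R *v \<gamma>) \<in> T \<beta>" unfolding T_def using ga(1) by blast
    ultimately obtain n :: nat where n: "n > 0" "of_nat n *\<^sub>R (\<beta> *\<^sub>R (R *v \<gamma>)) \<in> ?H2"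
      using pigeon[of ?H2 "T \<beta>" "\<beta> *\<^sub>R (R *v \<gamma>)"] addgrp_nat[OF gT] by blast
    have Rg: "R *v \<gamma> = (of_nat m / \<alpha>) *\<^sub>R bv j0" using ga(2) a0
      by (metis (no_types, lifting) divide_inverse_commute mult.commute scaleR_scaleR right_inverse scaleR_one)
    define c where "c = of_nat n * \<beta> * of_nat m / \<alpha>"
    have "of_nat n *\<^sub>R (\<beta> *\<^sub>R (R *v \<gamma>)) = c *\<^sub>R bv j0" unfolding Rg c_def by (simp add: algebra_simps)
    then have "c *\<^sub>R bv j0 \<in> \<Gamma>" using n by auto
    then obtain k where k: "c *\<^sub>R bv j0 = (\<Sum>i\<in>UNIV. of_int (k i) *\<^sub>R bv i)" using memG by blast
    then have ck: "of_int (k j0) = c" using coef[OF bv, of k c j0] by simp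
    have "\<alpha> * inverse \<beta> = (of_nat n * of_nat m) / c" unfolding c_def using a0 b0 n(1) m(1)
      by (simp add: field_simps)
    also have "\<dots> \<in> \<rat>" unfolding ck[symmetric] by simp
    finally show ?thesis .
  qed
  have P1: "b * \<alpha> \<in> scal \<Gamma> R" if bq: "b \<in> \<rat>" "b \<noteq> 0" and a: "\<alpha> \<in> scal \<Gamma> R" for b \<alpha>
  proof -
    obtain p q where pq: "q > 0" "b = of_int p / of_int q" using Rats_cases'[OF bq(1)] by metis
    have p0: "p \<noteq> 0" using pq bq(2) by auto
    have ca: "commensurate \<Gamma> (T \<alpha>)" using a scalT by blast
    let ?K = "\<Gamma> \<inter> T \<alpha>"
    have H0: "0 \<in> ?K" using gG gT unfolding addgrp_def by blast
    let ?H = "\<Gamma> \<inter> T (b * \<alpha>)"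
    have gH: "addgrp ?H" by (rule addgrp_Int[OF gG gT])
    define w where "w i = (b * \<alpha>) *\<^sub>R (R *v bv i)" for i
    have TL: "T (b * \<alpha>) = L w" unfolding T_def G w_def by (rule L_image[OF linR])
    have f1: "finite (cosets_in ?H \<Gamma>)"
      unfolding G
    proof (rule finite_cosets_L[OF gH[unfolded G]])
      fix i
      have "finite (cosets_in ?K \<Gamma>)" using ca unfolding commensurate_def by blast
      then obtain n :: nat where n: "n > 0" "of_nat n *\<^sub>R bv i \<in> ?K"
        using pigeon[of ?K \<Gamma> "bv i"] H0 addgrp_nat[OF gG] L_mem G by blast
      then obtain \<gamma> where ga: "\<gamma> \<in> \<Gamma>" "of_nat n *\<^sub>R bv i = \<alpha> *\<^sub>R (R *v \<gamma>)"
        unfolding T_def by auto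
      define M where "M = nat (q * \<bar>p\<bar>) * n"
      have M0: "M > 0" unfolding M_def using n(1) pq(1) p0 by simp
      have "of_int (q * q * sgn p) *\<^sub>R \<gamma> \<in> \<Gamma>" by (rule addgrp_int[OF gG ga(1)])
      moreover have "of_nat M *\<^sub>R bv i = (b * \<alpha>) *\<^sub>R (R *v (of_int (q * q * sgn p) *\<^sub>R \<gamma>))"
      proof -
        have "of_nat M *\<^sub>R bv i = (of_int (q * \<bar>p\<bar>) :: real) *\<^sub>R (of_nat n *\<^sub>R bv i)"
          unfolding M_def using pq(1) by (simp add: of_nat_mult)
        also have "\<dots> = (of_int (q * \<bar>p\<bar>) * \<alpha>) *\<^sub>R (R *v \<gamma>)" using ga(2) by simp
        also have "\<dots> = (b * \<alpha> * of_int (q * q * sgn p)) *\<^sub>R (R *v \<gamma>)"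
          using pq p0 by (simp add: abs_sgn field_simps mult_sgn_abs)
        finally show ?thesis by (simp add: matrix_vector_mult_scaleR)
      qed
      ultimately have "of_nat M *\<^sub>R bv i \<in> T (b * \<alpha>)" unfolding T_def by blast
      moreover have "of_nat M *\<^sub>R bv i \<in> \<Gamma>" using addgrp_nat[OF gG] L_mem G by metis
      ultimately show "\<exists>m::nat. m > 0 \<and> of_nat m *\<^sub>R bv i \<in> L bv \<inter> T (b * \<alpha>)"
        using M0 G by blast
    qed
    have f2: "finite (cosets_in ?H (T (b * \<alpha>)))"
      unfolding TL
    proof (rule finite_cosets_L[OF gH[unfolded TL]])
      fix i
      have "finite (cosets_in ?K (T \<alpha>))" using ca unfolding commensurate_def by blast
      moreover have "\<alpha> *\<^sub>R (R *v bv i) \<in> T \<alpha>" unfolding T_def using L_mem G by blast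
      ultimately obtain n :: nat where n: "n > 0" "of_nat n *\<^sub>R (\<alpha> *\<^sub>R (R *v bv i)) \<in> ?K"
        using pigeon[of ?K "T \<alpha>" "\<alpha> *\<^sub>R (R *v bv i)"] H0 addgrp_nat[OF gT] by blast
      define M where "M = nat q * n"
      have M0: "M > 0" unfolding M_def using n(1) pq(1) by simp
      have "of_nat M *\<^sub>R w i = of_int p *\<^sub>R (of_nat n *\<^sub>R (\<alpha> *\<^sub>R (R *v bv i)))"
        unfolding M_def w_def pq(2) using pq(1) by (simp add: of_nat_mult)
      moreover have "of_int p *\<^sub>R (of_nat n *\<^sub>R (\<alpha> *\<^sub>R (R *v bv i))) \<in> \<Gamma>"
        using addgrp_int[OF gG] n(2) by blast
      ultimately have "of_nat M *\<^sub>R w i \<in> \<Gamma>" by simp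
      moreover have "of_nat M *\<^sub>R w i \<in> L w" using addgrp_nat[OF addgrp_L] L_mem by metis
      ultimately show "\<exists>m::nat. m > 0 \<and> of_nat m *\<^sub>R w i \<in> \<Gamma> \<inter> L w"
        using M0 by blast
    qed
    show ?thesis using f1 f2 scalT unfolding commensurate_def by blast
  qed
  show ?thesis using P1 P2 P3 by auto
qed
end
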